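(* Let $n\ge 1$, $\alpha\in[0,n)$, and let $\phi(x)=\Phi(|x|)$ be a radial function on $\mathbb{R}^n$, where $\Phi:[0,\infty)\to[0,\infty)$ is decreasing, such that $\sup_{r>0}\phi^{\alpha}_r(e_1)<\infty$, where $e_1=(1,0,\dots,0)$. Suppose that there is a constant $C$ with $\|\mathcal{M}^{\alpha}_{\phi}\mu\|_{L^{\frac{n}{n-\alpha},\infty}(\mathbb{R}^n)}\le C\,\mu(\mathbb{R}^n)$ for all finite positive Borel measures $\mu$ on $\mathbb{R}^n$. Then for every finite positive Borel measure $V$ on $\mathbb{R}^n$ and every fixed $\rho>0$, $$\lim_{t\to0^+}\Big\|\mathcal{M}^{\alpha}_{\phi}(V_t)(\cdot)-\sup_{r>0}\phi^{\alpha}_r(\cdot)\,V(\mathbb{R}^n)\Big\|_{L^{\frac{n}{n-\alpha},\infty}(\mathbb{R}^n\setminus B(0,\rho))}=0.$$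
   Context: For $r>0$, $\phi^{\alpha}_r(x)=r^{-(n-\alpha)}\phi(x/r)$. For a positive measure $\mu$, $\mathcal{M}^{\alpha}_{\phi}(\mu)(x)=\sup_{r>0}\frac{1}{r^{n-\alpha}}\int_{\mathbb{R}^n}\phi\big(\frac{x-y}{r}\big)\,d\mu(y)$. For a measure $V$ and $t>0$, the dilation $V_t$ is the measure $V_t(E)=V(E/t)$, where $E/t=\{x/t:x\in E\}$. For a measurable set $E\subset\mathbb{R}^n$ and $0<p<\infty$, $\|f\|_{L^{p,\infty}(E)}=\sup_{\lambda>0}\lambda\,|\{x\in E:|f(x)|>\lambda\}|^{1/p}$, with $|\cdot|$ Lebesgue measure; $B(0,\rho)$ is the open ball of radius $\rho$ centered at $0$. *)

theory Defs
  imports "HOL-Analysis.Analysis"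
begin

definition phi_dil :: "(real \<Rightarrow> real) \<Rightarrow> real \<Rightarrow> real \<Rightarrow> 'a::euclidean_space \<Rightarrow> real" where
  "phi_dil Phi \<alpha> r x = r powr (-(real DIM('a) - \<alpha>)) * Phi (norm ((1 / r) *\<^sub>R x))"

definition frac_max :: "(real \<Rightarrow> real) \<Rightarrow> real \<Rightarrow> 'a::euclidean_space measure \<Rightarrow> 'a \<Rightarrow> ereal" where
  "frac_max Phi \<alpha> \<mu> x =
     (SUP r\<in>{0<..}. ereal (r powr (-(real DIM('a) - \<alpha>))) *
        enn2ereal (\<integral>\<^sup>+ y. ennreal (Phi (norm ((1 / r) *\<^sub>R (x - y)))) \<partial>\<mu>))"

definition dilate_measure :: "real \<Rightarrow> 'a::euclidean_space measure \<Rightarrow> 'a measure" where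
  "dilate_measure t V = distr V borel (\<lambda>x. t *\<^sub>R x)"

definition leb_outer :: "'a::euclidean_space set \<Rightarrow> ennreal" where
  "leb_outer S = (INF A\<in>{A \<in> sets lebesgue. S \<subseteq> A}. emeasure lebesgue A)"

definition enn_pow :: "ennreal \<Rightarrow> real \<Rightarrow> ennreal" where
  "enn_pow m q = (if m = \<infinity> then \<infinity> else ennreal (enn2real m powr q))"

definition weak_Lp :: "real \<Rightarrow> 'a::euclidean_space set \<Rightarrow> ('a \<Rightarrow> ereal) \<Rightarrow> ennreal" where
  "weak_Lp p E f = (SUP l\<in>{0<..}. ennreal l * enn_pow (leb_outer {x\<in>E. \<bar>f x\<bar> > ereal l}) (1 / p))"

end

theory Submission
  imports Defs
begin

lemma G_scale:
  fixes Phi :: "real \<Rightarrow> real" and d s :: real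
  assumes bdd: "bdd_above ((\<lambda>r. r powr -d * Phi (1/r)) ` {0<..})" and s: "s > 0"
  shows "bdd_above ((\<lambda>r. r powr -d * Phi (s/r)) ` {0<..})"
    and "(SUP r\<in>{0<..}. r powr -d * Phi (s/r)) = (SUP r\<in>{0<..}. r powr -d * Phi (1/r)) * s powr -d"
proof -
  let ?K = "(SUP r\<in>{0<..}. r powr -d * Phi (1/r))"
  have id: "r powr -d * Phi (s/r) = s powr -d * ((r/s) powr -d * Phi (1/(r/s)))" if "r > 0" for r
    using s that by (simp add: powr_divide)
  have le: "r powr -d * Phi (s/r) \<le> ?K * s powr -d" if "r > 0" for r
  proof -
    have "(r/s) powr -d * Phi (1/(r/s)) \<le> ?K"
      using that s by (intro cSUP_upper[OF _ bdd]) auto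
    then have "s powr -d * ((r/s) powr -d * Phi (1/(r/s))) \<le> s powr -d * ?K"
      by (intro mult_left_mono) auto
    then show ?thesis by (metis id[OF that] mult.commute)
  qed
  show b: "bdd_above ((\<lambda>r. r powr -d * Phi (s/r)) ` {0<..})"
    using le by (intro bdd_aboveI2) auto
  show "(SUP r\<in>{0<..}. r powr -d * Phi (s/r)) = ?K * s powr -d"
  proof (rule antisym)
    show "(SUP r\<in>{0<..}. r powr -d * Phi (s/r)) \<le> ?K * s powr -d"
      by (rule cSUP_least) (use le in auto)
    have "?K \<le> (SUP r\<in>{0<..}. r powr -d * Phi (s/r)) / s powr -d"
    proof (rule cSUP_least)
      fix u :: real assume u: "u \<in> {0<..}"
      have "u powr -d * Phi (1/u) = (s*u) powr -d * Phi (s/(s*u)) / s powr -d"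
        using u s by (simp add: powr_mult)
      also have "\<dots> \<le> (SUP r\<in>{0<..}. r powr -d * Phi (s/r)) / s powr -d"
        using u s by (intro divide_right_mono cSUP_upper[OF _ b]) auto
      finally show "u powr -d * Phi (1/u) \<le> (SUP r\<in>{0<..}. r powr -d * Phi (s/r)) / s powr -d" .
    qed auto
    then show "?K * s powr -d \<le> (SUP r\<in>{0<..}. r powr -d * Phi (s/r))"
      using s by (simp add: pos_le_divide_eq)
  qed
qed

lemma leb_outer_mono: "S \<subseteq> T \<Longrightarrow> leb_outer S \<le> leb_outer T"
  unfolding leb_outer_def by (rule INF_superset_mono) auto

lemma leb_outer_le: "A \<in> sets lebesgue \<Longrightarrow> S \<subseteq> A \<Longrightarrow> leb_outer S \<le> emeasure lebesgue A"
  unfolding leb_outer_def by (rule INF_lower) auto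

lemma leb_outer_Un:
  assumes A: "A \<in> sets lebesgue" and S: "S \<subseteq> A \<union> T"
  shows "leb_outer S \<le> emeasure lebesgue A + leb_outer T"
proof (rule ennreal_le_epsilon)
  fix e :: real assume e: "0 < e"
  show "leb_outer S \<le> emeasure lebesgue A + leb_outer T + ennreal e"
  proof (cases "leb_outer T = \<infinity>")
    case True then show ?thesis by simp
  next
    case False
    then have "leb_outer T < leb_outer T + ennreal e"
      using e by (simp add: ennreal_less_top less_top)
    then obtain B where B: "B \<in> sets lebesgue" "T \<subseteq> B" "emeasure lebesgue B < leb_outer T + ennreal e"
      unfolding leb_outer_def[of T] by (auto simp: INF_less_iff)
    have "leb_outer S \<le> emeasure lebesgue (A \<union> B)"
      using S B A by (intro leb_outer_le) auto
    also have "\<dots> \<le> emeasure lebesgue A + emeasure lebesgue B"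
      using A B by (intro emeasure_subadditive) auto
    also have "\<dots> \<le> emeasure lebesgue A + (leb_outer T + ennreal e)"
      using B by (intro add_left_mono) auto
    finally show ?thesis by (simp add: add.assoc)
  qed
qed

lemma leb_outer_Un2:
  assumes S: "S \<subseteq> A \<union> T"
  shows "leb_outer S \<le> leb_outer A + leb_outer T"
proof (rule ennreal_le_epsilon)
  fix e :: real assume e: "0 < e"
  show "leb_outer S \<le> leb_outer A + leb_outer T + ennreal e"
  proof (cases "leb_outer A = \<infinity>")
    case True then show ?thesis by simp
  next
    case False
    then have "leb_outer A < leb_outer A + ennreal e"
      using e by (simp add: ennreal_less_top less_top)
    then obtain B where B: "B \<in> sets lebesgue" "A \<subseteq> B" "emeasure lebesgue B < leb_outer A + ennreal e"
      unfolding leb_outer_def[of A] by (auto simp: INF_less_iff)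
    have "leb_outer S \<le> emeasure lebesgue B + leb_outer T"
      using S B by (intro leb_outer_Un) auto
    also have "\<dots> \<le> leb_outer A + ennreal e + leb_outer T"
      using B by (intro add_right_mono) auto
    finally show ?thesis by (simp add: ac_simps)
  qed
qed

lemma enn_pow_mono: "q > 0 \<Longrightarrow> a \<le> b \<Longrightarrow> enn_pow a q \<le> enn_pow b q"
  unfolding enn_pow_def
  by (auto simp: top_unique less_top intro!: ennreal_leI powr_mono2 enn2real_mono)

lemma enn_pow_ennreal: "x \<ge> 0 \<Longrightarrow> enn_pow (ennreal x) q = ennreal (x powr q)"
  unfolding enn_pow_def by simp

lemma powr_add_le2:
  fixes x y q :: real
  assumes "x \<ge> 0" "y \<ge> 0" "0 < q" "q \<le> 1"
  shows "(x + y) powr q \<le> 2 * (x powr q + y powr q)"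
proof -
  have "(x + y) powr q \<le> (2 * max x y) powr q"
    using assms by (intro powr_mono2) auto
  also have "\<dots> = 2 powr q * max x y powr q"
    using assms by (simp add: powr_mult)
  also have "\<dots> \<le> 2 * max x y powr q"
    using assms by (intro mult_right_mono) (auto intro: order.trans[OF powr_mono[of q 1]])
  also have "\<dots> \<le> 2 * (x powr q + y powr q)"
    by (auto simp: max_def)
  finally show ?thesis .
qed

lemma enn_pow_add:
  assumes "0 < q" "q \<le> 1"
  shows "enn_pow (a + b) q \<le> 2 * (enn_pow a q + enn_pow b q)"
proof (cases "a = \<infinity> \<or> b = \<infinity>")
  case True then show ?thesis unfolding enn_pow_def by (auto simp: ennreal_mult_top)
next
  case False
  then obtain x y where xy: "a = ennreal x" "b = ennreal y" "x \<ge> 0" "y \<ge> 0"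
    by (metis ennreal_cases top_ennreal.rep_eq infinity_ennreal_def)
  have "enn_pow (a + b) q = ennreal ((x + y) powr q)"
    using xy by (simp add: enn_pow_ennreal flip: ennreal_plus)
  also have "\<dots> \<le> ennreal (2 * (x powr q + y powr q))"
    using xy assms by (intro ennreal_leI powr_add_le2) auto
  also have "\<dots> = 2 * (enn_pow a q + enn_pow b q)"
    using xy by (simp add: enn_pow_ennreal ennreal_mult ennreal_plus)
  finally show ?thesis .
qed

lemma small_part:
  fixes D d l :: real
  assumes d: "d > 0" and D: "D \<ge> 0" and l: "l > 0"
  shows "ennreal l * enn_pow (leb_outer {x::'a::euclidean_space. x \<noteq> 0 \<and> D * norm x powr -d > l/2})
           (d / real DIM('a)) \<le> ennreal (2 * D * unit_ball_vol (real DIM('a)) powr (d / real DIM('a)))"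
proof (cases "D = 0")
  case True
  then have e: "{x::'a. x \<noteq> 0 \<and> D * norm x powr -d > l/2} = {}" using l by auto
  have "leb_outer ({}::'a set) = 0"
    using leb_outer_le[of "{}" "{}::'a set"] by simp
  then show ?thesis unfolding e by (simp add: enn_pow_def)
next
  case False
  with D have Dp: "D > 0" by simp
  define n where "n = real DIM('a)"
  have n: "n > 0" unfolding n_def by simp
  define r0 where "r0 = (2*D/l) powr (1/d)"
  have r0: "r0 > 0" using Dp l unfolding r0_def by simp
  have sub: "{x::'a. x \<noteq> 0 \<and> D * norm x powr -d > l/2} \<subseteq> ball 0 r0"
  proof
    fix x :: 'a assume x: "x \<in> {x. x \<noteq> 0 \<and> D * norm x powr -d > l/2}"
    show "x \<in> ball 0 r0"
    proof (rule ccontr)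
      assume "x \<notin> ball 0 r0"
      then have "r0 \<le> norm x" by simp
      then have "norm x powr -d \<le> r0 powr -d"
        using r0 d by (intro powr_mono2') auto
      also have "r0 powr -d = l/(2*D)"
        unfolding r0_def using Dp l d by (simp add: powr_powr powr_minus_divide)
      finally have "D * norm x powr -d \<le> l/2"
        using Dp by (simp add: field_simps)
      with x show False by simp
    qed
  qed
  have "leb_outer {x::'a. x \<noteq> 0 \<and> D * norm x powr -d > l/2} \<le> emeasure lebesgue (ball (0::'a) r0)"
    by (intro leb_outer_le sub) auto
  also have "\<dots> = ennreal (unit_ball_vol n * r0 ^ DIM('a))"
    using emeasure_ball[of r0 "0::'a"] r0 unfolding n_def by simp
  finally have le: "enn_pow (leb_outer {x::'a. x \<noteq> 0 \<and> D * norm x powr -d > l/2}) (d/n)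
      \<le> ennreal ((unit_ball_vol n * r0 ^ DIM('a)) powr (d/n))"
    using d n r0 by (subst enn_pow_ennreal[symmetric]) (auto intro!: enn_pow_mono)
  have "(unit_ball_vol n * r0 ^ DIM('a)) powr (d/n) = unit_ball_vol n powr (d/n) * (2*D/l)"
  proof -
    have "(r0 ^ DIM('a)) powr (d/n) = r0 powr (n * (d/n))"
      using r0 by (simp add: powr_realpow[symmetric] powr_powr n_def)
    also have "\<dots> = r0 powr d" using n by simp
    also have "\<dots> = 2*D/l" unfolding r0_def using d Dp l by (simp add: powr_powr)
    finally show ?thesis using r0 n by (simp add: powr_mult)
  qed
  then have "ennreal l * enn_pow (leb_outer {x::'a. x \<noteq> 0 \<and> D * norm x powr -d > l/2}) (d/n)
      \<le> ennreal l * ennreal (unit_ball_vol n powr (d/n) * (2*D/l))"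
    using le by (intro mult_left_mono) auto
  also have "\<dots> = ennreal (2 * D * unit_ball_vol n powr (d/n))"
  proof -
    have "l * (unit_ball_vol n powr (d/n) * (2*D/l)) = 2 * D * unit_ball_vol n powr (d/n)"
      using l by (simp add: field_simps)
    moreover have "unit_ball_vol n powr (d/n) * (2*D/l) \<ge> 0" using Dp l by simp
    ultimately show ?thesis using l by (metis ennreal_mult less_imp_le)
  qed
  finally show ?thesis unfolding n_def .
qed

lemma Phi_meas:
  fixes Phi :: "real \<Rightarrow> real"
  assumes Phi_decr: "antimono_on {0..} Phi"
  shows "(\<lambda>z::'a::euclidean_space. ennreal (Phi (norm ((1/r) *\<^sub>R (x - z))))) \<in> borel_measurable borel"
proof -
  define P where "P s = - Phi (max s 0)" for s
  have "mono P" unfolding mono_def P_def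
    using Phi_decr by (auto simp: monotone_on_def)
  then have "P \<in> borel_measurable borel" by (rule borel_measurable_mono)
  then have m: "(\<lambda>s. Phi (max s 0)) \<in> borel_measurable borel"
    using borel_measurable_uminus[of P borel] unfolding P_def by simp
  have "(\<lambda>z::'a. Phi (max (norm ((1/r) *\<^sub>R (x - z))) 0)) \<in> borel_measurable borel"
    by (intro measurable_compose[OF _ m]) auto
  then show ?thesis by simp
qed

lemma frac_max_alt:
  "frac_max Phi \<alpha> \<mu> x = (SUP r\<in>{0<..}. enn2ereal (ennreal (r powr (-(real DIM('a) - \<alpha>))) *
        (\<integral>\<^sup>+ y. ennreal (Phi (norm ((1 / r) *\<^sub>R (x - y)))) \<partial>\<mu>)))"
  for x :: "'a::euclidean_space"
  unfolding frac_max_def by (intro SUP_cong refl) (simp add: times_ennreal.rep_eq)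

lemma frac_max_le:
  fixes x :: "'a::euclidean_space"
  assumes "A \<ge> 0"
    and "\<And>r. r > 0 \<Longrightarrow> ennreal (r powr (-(real DIM('a) - \<alpha>))) * (\<integral>\<^sup>+ y. ennreal (Phi (norm ((1 / r) *\<^sub>R (x - y)))) \<partial>\<mu>)
       \<le> ennreal A + ennreal (r powr (-(real DIM('a) - \<alpha>))) * (\<integral>\<^sup>+ y. ennreal (Phi (norm ((1 / r) *\<^sub>R (x - y)))) \<partial>\<mu>2)"
  shows "frac_max Phi \<alpha> \<mu> x \<le> ereal A + frac_max Phi \<alpha> \<mu>2 x"
  unfolding frac_max_alt[of Phi \<alpha> \<mu>]
proof (rule SUP_least)
  fix r :: real assume r: "r \<in> {0<..}"
  have "enn2ereal (ennreal (r powr (-(real DIM('a) - \<alpha>))) * (\<integral>\<^sup>+ y. ennreal (Phi (norm ((1 / r) *\<^sub>R (x - y)))) \<partial>\<mu>))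
     \<le> enn2ereal (ennreal A + ennreal (r powr (-(real DIM('a) - \<alpha>))) * (\<integral>\<^sup>+ y. ennreal (Phi (norm ((1 / r) *\<^sub>R (x - y)))) \<partial>\<mu>2))"
    using assms(2)[of r] r by (intro less_eq_ennreal.rep_eq[THEN iffD1]) simp
  also have "\<dots> = ereal A + enn2ereal (ennreal (r powr (-(real DIM('a) - \<alpha>))) * (\<integral>\<^sup>+ y. ennreal (Phi (norm ((1 / r) *\<^sub>R (x - y)))) \<partial>\<mu>2))"
    using assms(1) by (simp add: plus_ennreal.rep_eq)
  also have "\<dots> \<le> ereal A + frac_max Phi \<alpha> \<mu>2 x"
    unfolding frac_max_alt[of Phi \<alpha> \<mu>2]
    by (intro add_left_mono SUP_upper r)
  finally show "enn2ereal (ennreal (r powr (-(real DIM('a) - \<alpha>))) * (\<integral>\<^sup>+ y. ennreal (Phi (norm ((1 / r) *\<^sub>R (x - y)))) \<partial>\<mu>))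
     \<le> ereal A + frac_max Phi \<alpha> \<mu>2 x" .
qed

lemma frac_max_ge:
  fixes x :: "'a::euclidean_space"
  assumes "B \<ge> 0" "r > 0"
    and "ennreal B \<le> ennreal (r powr (-(real DIM('a) - \<alpha>))) * (\<integral>\<^sup>+ y. ennreal (Phi (norm ((1 / r) *\<^sub>R (x - y)))) \<partial>\<mu>)"
  shows "ereal B \<le> frac_max Phi \<alpha> \<mu> x"
proof -
  have "ereal B = enn2ereal (ennreal B)" using assms by simp
  also have "\<dots> \<le> enn2ereal (ennreal (r powr (-(real DIM('a) - \<alpha>))) * (\<integral>\<^sup>+ y. ennreal (Phi (norm ((1 / r) *\<^sub>R (x - y)))) \<partial>\<mu>))"
    using assms(3) by (intro less_eq_ennreal.rep_eq[THEN iffD1])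
  also have "\<dots> \<le> frac_max Phi \<alpha> \<mu> x"
    unfolding frac_max_alt[of Phi \<alpha> \<mu>] by (intro SUP_upper) (use assms in auto)
  finally show ?thesis .
qed

lemma int_upper:
  fixes V :: "'a::euclidean_space measure" and Phi :: "real \<Rightarrow> real"
  assumes V: "sets V = sets borel" and t: "t > 0" and R: "R \<ge> 0" and r: "r > 0"
    and xR: "norm x > t * R" and Phi_decr: "antimono_on {0..} Phi"
  shows "(\<integral>\<^sup>+ y. ennreal (Phi (norm ((1 / r) *\<^sub>R (x - y)))) \<partial>dilate_measure t V)
     \<le> ennreal (Phi ((norm x - t*R)/r)) * emeasure V UNIV +
        (\<integral>\<^sup>+ y. ennreal (Phi (norm ((1 / r) *\<^sub>R (x - y)))) \<partial>dilate_measure t (density V (indicator (- cball 0 R))))"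
proof -
  let ?f = "\<lambda>z. ennreal (Phi (norm ((1 / r) *\<^sub>R (x - z))))"
  let ?c = "ennreal (Phi ((norm x - t*R)/r))"
  have fm: "?f \<in> borel_measurable borel" by (rule Phi_meas[OF Phi_decr])
  have fmd: "?f \<in> borel_measurable (distr V borel (\<lambda>y. t *\<^sub>R y))"
    using fm by (simp only: measurable_cong_sets[OF sets_distr refl])
  have sm: "(\<lambda>y. t *\<^sub>R y) \<in> measurable V borel"
    unfolding measurable_cong_sets[OF V refl] by simp
  have fm': "(\<lambda>y. ?f (t *\<^sub>R y)) \<in> borel_measurable V"
    using measurable_compose[OF sm fm] .
  have Bm: "cball (0::'a) R \<in> sets V" "- cball (0::'a) R \<in> sets V" using V by auto
  have im: "indicator (- cball (0::'a) R) \<in> borel_measurable V"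
    using Bm by (simp add: borel_measurable_indicator)
  have "(\<integral>\<^sup>+ y. ?f y \<partial>dilate_measure t V) = (\<integral>\<^sup>+ y. ?f (t *\<^sub>R y) \<partial>V)"
    unfolding dilate_measure_def by (rule nn_integral_distr[OF sm fmd])
  also have "\<dots> \<le> (\<integral>\<^sup>+ y. ?c * indicator (cball 0 R) y + indicator (- cball 0 R) y * ?f (t *\<^sub>R y) \<partial>V)"
  proof (rule nn_integral_mono)
    fix y :: 'a
    show "?f (t *\<^sub>R y) \<le> ?c * indicator (cball 0 R) y + indicator (- cball 0 R) y * ?f (t *\<^sub>R y)"
    proof (cases "y \<in> cball 0 R")
      case True
      then have "norm (t *\<^sub>R y) \<le> t * R" using t by (simp)
      then have "norm x - t*R \<le> norm (x - t *\<^sub>R y)"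
        using norm_triangle_ineq2[of x "t *\<^sub>R y"] by linarith
      then have le: "(norm x - t*R)/r \<le> norm (x - t *\<^sub>R y)/r" using r by (simp add: divide_right_mono)
      have "Phi (norm (x - t *\<^sub>R y)/r) \<le> Phi ((norm x - t*R)/r)"
        using Phi_decr le xR r unfolding monotone_on_def by auto
      then show ?thesis using True r by (simp add: ennreal_leI)
    qed simp
  qed
  also have "\<dots> = (\<integral>\<^sup>+ y. ?c * indicator (cball 0 R) y \<partial>V) + (\<integral>\<^sup>+ y. indicator (- cball 0 R) y * ?f (t *\<^sub>R y) \<partial>V)"
    using Bm im fm' by (intro nn_integral_add) auto
  also have "(\<integral>\<^sup>+ y. ?c * indicator (cball 0 R) y \<partial>V) = ?c * emeasure V (cball 0 R)"
    by (rule nn_integral_cmult_indicator[OF Bm(1)])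
  also have "\<dots> \<le> ?c * emeasure V UNIV"
    using V by (intro mult_left_mono emeasure_mono) auto
  also have "(\<integral>\<^sup>+ y. indicator (- cball 0 R) y * ?f (t *\<^sub>R y) \<partial>V) = (\<integral>\<^sup>+ y. ?f (t *\<^sub>R y) \<partial>density V (indicator (- cball 0 R)))"
    using im fm' by (rule nn_integral_density[symmetric])
  also have "\<dots> = (\<integral>\<^sup>+ y. ?f y \<partial>dilate_measure t (density V (indicator (- cball 0 R))))"
    unfolding dilate_measure_def
    by (rule nn_integral_distr[symmetric]) (use sm fm in auto)
  finally show ?thesis by (simp add: add_right_mono)
qed

lemma int_lower:
  fixes V :: "'a::euclidean_space measure" and Phi :: "real \<Rightarrow> real"
  assumes V: "sets V = sets borel" and t: "t > 0" and R: "R \<ge> 0" and r: "r > 0"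
    and Phi_decr: "antimono_on {0..} Phi" and Phi_nonneg: "\<forall>s\<ge>0. Phi s \<ge> 0"
  shows "ennreal (Phi ((norm x + t*R)/r)) * emeasure V (cball 0 R) \<le>
     (\<integral>\<^sup>+ y. ennreal (Phi (norm ((1 / r) *\<^sub>R (x - y)))) \<partial>dilate_measure t V)"
proof -
  let ?f = "\<lambda>z. ennreal (Phi (norm ((1 / r) *\<^sub>R (x - z))))"
  let ?c = "ennreal (Phi ((norm x + t*R)/r))"
  have fm: "?f \<in> borel_measurable borel" by (rule Phi_meas[OF Phi_decr])
  have fmd: "?f \<in> borel_measurable (distr V borel (\<lambda>y. t *\<^sub>R y))"
    using fm by (simp only: measurable_cong_sets[OF sets_distr refl])
  have sm: "(\<lambda>y. t *\<^sub>R y) \<in> measurable V borel"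
    unfolding measurable_cong_sets[OF V refl] by simp
  have Bm: "cball (0::'a) R \<in> sets V" using V by auto
  have "?c * emeasure V (cball 0 R) = (\<integral>\<^sup>+ y. ?c * indicator (cball 0 R) y \<partial>V)"
    using Bm by (rule nn_integral_cmult_indicator[symmetric])
  also have "\<dots> \<le> (\<integral>\<^sup>+ y. ?f (t *\<^sub>R y) \<partial>V)"
  proof (rule nn_integral_mono)
    fix y :: 'a
    show "?c * indicator (cball 0 R) y \<le> ?f (t *\<^sub>R y)"
    proof (cases "y \<in> cball 0 R")
      case True
      then have "norm (t *\<^sub>R y) \<le> t * R" using t by (simp)
      then have "norm (x - t *\<^sub>R y) \<le> norm x + t*R"
        using norm_triangle_ineq4[of x "t *\<^sub>R y"] by linarith
      then have le: "norm (x - t *\<^sub>R y)/r \<le> (norm x + t*R)/r" using r by (simp add: divide_right_mono)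
      have nn: "0 \<le> norm (x - t *\<^sub>R y)/r" using r by simp
      have "Phi ((norm x + t*R)/r) \<le> Phi (norm (x - t *\<^sub>R y)/r)"
        using Phi_decr le nn unfolding monotone_on_def by (meson atLeast_iff order.trans)
      then show ?thesis using True r by (simp add: ennreal_leI)
    qed simp
  qed
  also have "\<dots> = (\<integral>\<^sup>+ y. ?f y \<partial>dilate_measure t V)"
    unfolding dilate_measure_def by (rule nn_integral_distr[symmetric, OF sm fmd])
  finally show ?thesis .
qed

lemma real_ineq:
  fixes K m \<eta> S a b P Q M T :: real
  assumes "K \<ge> 0" "m \<ge> \<eta>" "\<eta> \<ge> 0" "S > 0" "a \<ge> 1" "0 \<le> b" "b \<le> 1" "P \<le> S*a" "Q \<ge> S*b"
    "M \<le> K*P*m + T" "M \<ge> K*Q*(m-\<eta>)" "T \<ge> 0"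
  shows "\<bar>M - K*S*m\<bar> \<le> (K*m*(a-b) + K*\<eta>)*S + T"
proof -
  have m: "m \<ge> 0" using assms by linarith
  have h1: "K*P*m \<le> K*(S*a)*m" using assms m by (intro mult_right_mono mult_left_mono) auto
  have h2: "K*(S*b)*(m-\<eta>) \<le> K*Q*(m-\<eta>)" using assms by (intro mult_right_mono mult_left_mono) auto
  have h3: "(K*S*m)*b \<le> (K*S*m)*1" using assms m by (intro mult_left_mono) auto
  have h4: "(K*S*b)*\<eta> \<le> (K*S*1)*\<eta>" using assms by (intro mult_right_mono mult_left_mono) auto
  have h5: "(K*S*m)*1 \<le> (K*S*m)*a" using assms m by (intro mult_left_mono) auto
  have h6: "0 \<le> K*S*\<eta>" using assms by simp
  define A1 where "A1 = K*S*(a*m)"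
  define A2 where "A2 = K*S*(b*m)"
  define A3 where "A3 = K*S*(b*\<eta>)"
  define A4 where "A4 = K*S*\<eta>"
  define A5 where "A5 = K*S*m"
  have g1: "K*P*m \<le> A1" using h1 unfolding A1_def by (simp add: algebra_simps)
  have g2: "A2 - A3 \<le> K*Q*(m-\<eta>)" using h2 unfolding A2_def A3_def by (simp add: algebra_simps)
  have g3: "A2 \<le> A5" using h3 unfolding A2_def A5_def by (simp add: algebra_simps)
  have g4: "A3 \<le> A4" using h4 unfolding A3_def A4_def by (simp add: algebra_simps)
  have g5: "A5 \<le> A1" using h5 unfolding A1_def A5_def by (simp add: algebra_simps)
  have g6: "0 \<le> A4" using h6 unfolding A4_def .
  have eq: "(K*m*(a-b) + K*\<eta>)*S = A1 - A2 + A4" unfolding A1_def A2_def A4_def by (simp add: algebra_simps)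
  have eq2: "K*S*m = A5" unfolding A5_def ..
  show ?thesis unfolding eq eq2
    using g1 g2 g3 g4 g5 g6 assms(10,11,12) by linarith
qed

lemma pointwise:
  fixes Phi :: "real \<Rightarrow> real" and \<alpha> :: real and V :: "'a::euclidean_space measure" and x :: 'a
  assumes alpha: "0 \<le> \<alpha>" "\<alpha> < real DIM('a)"
    and Phi_nonneg: "\<forall>s\<ge>0. Phi s \<ge> 0"
    and Phi_decr: "antimono_on {0..} Phi"
    and bdd1: "bdd_above ((\<lambda>r. r powr -(real DIM('a) - \<alpha>) * Phi (1/r)) ` {0<..})"
    and V: "sets V = sets borel" and fin: "emeasure V UNIV < \<infinity>"
    and t: "t > 0" and R: "R \<ge> 0" and \<rho>: "\<rho> > 0" and x: "norm x \<ge> \<rho>" and tR: "t * R \<le> \<rho>/2"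
  shows "\<bar>frac_max Phi \<alpha> (dilate_measure t V) x
      - ereal ((SUP r\<in>{0<..}. r powr -(real DIM('a) - \<alpha>) * Phi (1/r)) * norm x powr -(real DIM('a) - \<alpha>) * measure V UNIV)\<bar>
    \<le> ereal (((SUP r\<in>{0<..}. r powr -(real DIM('a) - \<alpha>) * Phi (1/r)) * measure V UNIV *
          ((1 - t*R/\<rho>) powr -(real DIM('a) - \<alpha>) - (1 + t*R/\<rho>) powr -(real DIM('a) - \<alpha>))
        + (SUP r\<in>{0<..}. r powr -(real DIM('a) - \<alpha>) * Phi (1/r)) * measure V (- cball 0 R))
        * norm x powr -(real DIM('a) - \<alpha>))
      + frac_max Phi \<alpha> (dilate_measure t (density V (indicator (- cball 0 R)))) x"
proof -
  define d where "d = real DIM('a) - \<alpha>"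
  define K where "K = (SUP r\<in>{0<..}. r powr -d * Phi (1/r))"
  define m where "m = measure V UNIV"
  define \<eta> where "\<eta> = measure V (- cball 0 R)"
  define s where "s = norm x"
  define u where "u = t * R"
  define \<tau> where "\<tau> = u / \<rho>"
  let ?M = "frac_max Phi \<alpha> (dilate_measure t V) x"
  let ?T = "frac_max Phi \<alpha> (dilate_measure t (density V (indicator (- cball 0 R)))) x"
  have d: "d > 0" using alpha unfolding d_def by simp
  have bdd: "bdd_above ((\<lambda>r. r powr -d * Phi (1/r)) ` {0<..})" using bdd1 unfolding d_def .
  have K0: "K \<ge> 0"
  proof -
    have "1 powr -d * Phi (1/1) \<le> K" unfolding K_def by (rule cSUP_upper[OF _ bdd]) auto
    moreover have "Phi 1 \<ge> 0" using Phi_nonneg by auto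
    ultimately show ?thesis by simp
  qed
  have spV: "space V = UNIV" using sets_eq_imp_space_eq[OF V] by simp
  interpret V: finite_measure V using fin spV by (intro finite_measureI) (simp add: less_top)
  have Vm: "emeasure V UNIV = ennreal m" unfolding m_def using V.emeasure_eq_measure by simp
  have m0: "m \<ge> 0" unfolding m_def by simp
  have \<eta>0: "\<eta> \<ge> 0" unfolding \<eta>_def by simp
  have Vc: "emeasure V (cball 0 R) = ennreal (m - \<eta>)"
  proof -
    have "measure V (cball 0 R) = measure V (space V) - measure V (- cball 0 R)"
      using V.finite_measure_compl[of "- cball 0 R"] V spV by (simp add: Compl_eq_Diff_UNIV Diff_Diff_Int)
    then show ?thesis using V.emeasure_eq_measure spV unfolding m_def \<eta>_def by simp
  qed
  have m\<eta>: "\<eta> \<le> m" using Vc Vm V.bounded_measure unfolding \<eta>_def m_def by (simp add: spV)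
  have s: "s \<ge> \<rho>" unfolding s_def using x .
  have u: "0 \<le> u" "u \<le> \<rho>/2" unfolding u_def using t R tR by auto
  have \<tau>: "0 \<le> \<tau>" "\<tau> \<le> 1/2" unfolding \<tau>_def using u \<rho> by auto
  have su: "s - u > 0" using s u \<rho> by linarith
  have G: "bdd_above ((\<lambda>r. r powr -d * Phi (s'/r)) ` {0<..})"
     "(SUP r\<in>{0<..}. r powr -d * Phi (s'/r)) = K * s' powr -d" if "s' > 0" for s'
    using G_scale[OF bdd that] unfolding K_def by auto
  have Gle: "r powr -d * Phi (s'/r) \<le> K * s' powr -d" if "s' > 0" "r > 0" for s' r
    using cSUP_upper[OF _ G(1)[OF that(1)], of r] G(2)[OF that(1)] that by simp
  have upper: "?M \<le> ereal (K * (s-u) powr -d * m) + ?T"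
  proof (rule frac_max_le)
    show "0 \<le> K * (s-u) powr -d * m" using K0 m0 by simp
    fix r :: real assume r: "r > 0"
    have "(\<integral>\<^sup>+ y. ennreal (Phi (norm ((1 / r) *\<^sub>R (x - y)))) \<partial>dilate_measure t V)
     \<le> ennreal (Phi ((norm x - t*R)/r)) * emeasure V UNIV +
        (\<integral>\<^sup>+ y. ennreal (Phi (norm ((1 / r) *\<^sub>R (x - y)))) \<partial>dilate_measure t (density V (indicator (- cball 0 R))))"
      (is "?I \<le> _ + ?I2")
      using su by (intro int_upper[OF V t R r _ Phi_decr]) (simp add: s_def u_def)
    then have "ennreal (r powr -d) * ?I \<le> ennreal (r powr -d) * (ennreal (Phi ((s-u)/r)) * ennreal m + ?I2)"
      unfolding Vm s_def u_def by (rule mult_left_mono) simp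
    also have "\<dots> = ennreal (r powr -d * Phi ((s-u)/r) * m) + ennreal (r powr -d) * ?I2"
    proof -
      have "Phi ((s-u)/r) \<ge> 0" using Phi_nonneg su r by simp
      then show ?thesis using m0 by (simp add: distrib_left ennreal_mult mult.assoc)
    qed
    also have "\<dots> \<le> ennreal (K * (s-u) powr -d * m) + ennreal (r powr -d) * ?I2"
      using Gle[OF su r] m0 by (intro add_right_mono ennreal_leI mult_right_mono) auto
    finally show "ennreal (r powr (-(real DIM('a) - \<alpha>))) * ?I
       \<le> ennreal (K * (s-u) powr -d * m) + ennreal (r powr (-(real DIM('a) - \<alpha>))) * ?I2"
      unfolding d_def .
  qed
  have T0: "0 \<le> ?T"
    using frac_max_ge[where B=0 and r=1 and \<mu>="dilate_measure t (density V (indicator (- cball 0 R)))" and Phi=Phi and \<alpha>=\<alpha> and x=x] by (simp add: zero_ereal_def)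
  have lowr: "ereal (r powr -d * Phi ((s+u)/r) * (m - \<eta>)) \<le> ?M" if r: "r > 0" for r
  proof (rule frac_max_ge)
    have P0: "Phi ((s+u)/r) \<ge> 0" using Phi_nonneg su r u by simp
    then show "0 \<le> r powr -d * Phi ((s+u)/r) * (m - \<eta>)" using m\<eta> by simp
    show "r > 0" by fact
    have "ennreal (Phi ((norm x + t*R)/r)) * emeasure V (cball 0 R) \<le>
     (\<integral>\<^sup>+ y. ennreal (Phi (norm ((1 / r) *\<^sub>R (x - y)))) \<partial>dilate_measure t V)"
      (is "_ \<le> ?I")
      by (rule int_lower[OF V t R r Phi_decr Phi_nonneg])
    then have "ennreal (r powr -d) * (ennreal (Phi ((s+u)/r)) * ennreal (m - \<eta>)) \<le> ennreal (r powr -d) * ?I"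
      unfolding Vc s_def u_def by (rule mult_left_mono) simp
    moreover have "ennreal (r powr -d * Phi ((s+u)/r) * (m - \<eta>)) = ennreal (r powr -d) * (ennreal (Phi ((s+u)/r)) * ennreal (m - \<eta>))"
      using P0 m\<eta> by (simp add: ennreal_mult mult.assoc)
    ultimately show "ennreal (r powr -d * Phi ((s+u)/r) * (m - \<eta>)) \<le> ennreal (r powr (-(real DIM('a) - \<alpha>))) * ?I"
      unfolding d_def by simp
  qed
  have M0: "0 \<le> ?M"
    using frac_max_ge[where B=0 and r=1 and \<mu>="dilate_measure t V" and Phi=Phi and \<alpha>=\<alpha> and x=x] by (simp add: zero_ereal_def)
  have su': "s + u > 0" using su u by linarith
  have lower: "K * (s+u) powr -d * (m - \<eta>) \<le> M'" if MM: "?M = ereal M'" for M'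
  proof (cases "m - \<eta> = 0")
    case True then show ?thesis using M0 MM by simp
  next
    case False
    then have c: "m - \<eta> > 0" using m\<eta> by simp
    have "(SUP r\<in>{0<..}. r powr -d * Phi ((s+u)/r)) \<le> M' / (m - \<eta>)"
    proof (rule cSUP_least)
      fix r :: real assume "r \<in> {0<..}"
      then have "r powr -d * Phi ((s+u)/r) * (m - \<eta>) \<le> M'" using lowr[of r] MM by simp
      then show "r powr -d * Phi ((s+u)/r) \<le> M' / (m - \<eta>)" using c by (simp add: pos_le_divide_eq)
    qed simp
    then show ?thesis using G(2)[OF su'] c by (simp add: pos_le_divide_eq)
  qed
  define S where "S = s powr -d"
  define a where "a = (1 - \<tau>) powr -d"
  define b where "b = (1 + \<tau>) powr -d"
  have S: "S > 0" unfolding S_def using s \<rho> by simp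
  have ha: "a \<ge> 1" unfolding a_def using powr_mono2'[of "-d" "1 - \<tau>" 1] \<tau> d by simp
  have hb: "b \<le> 1" "b \<ge> 0" unfolding b_def using powr_mono2'[of "-d" 1 "1 + \<tau>"] \<tau> d by simp_all
  have hP: "(s-u) powr -d \<le> S * a"
  proof -
    have "u \<le> s * \<tau>" unfolding \<tau>_def using s u \<rho> by (simp add: field_simps mult_right_mono)
    then have "s * (1 - \<tau>) \<le> s - u" by (simp add: algebra_simps)
    moreover have "s * (1 - \<tau>) > 0" using s \<rho> \<tau> by simp
    ultimately have "(s-u) powr -d \<le> (s * (1 - \<tau>)) powr -d" using d by (intro powr_mono2') auto
    then show ?thesis unfolding S_def a_def using s \<rho> \<tau> by (simp add: powr_mult)
  qed
  have hQ: "S * b \<le> (s+u) powr -d"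
  proof -
    have "u \<le> s * \<tau>" unfolding \<tau>_def using s u \<rho> by (simp add: field_simps mult_right_mono)
    then have "s + u \<le> s * (1 + \<tau>)" by (simp add: algebra_simps)
    then have "(s * (1 + \<tau>)) powr -d \<le> (s+u) powr -d" using d su' by (intro powr_mono2') auto
    then show ?thesis unfolding S_def b_def using s \<rho> \<tau> by (simp add: powr_mult)
  qed
  have goal: "\<bar>?M - ereal (K * S * m)\<bar> \<le> ereal ((K*m*(a-b) + K*\<eta>) * S) + ?T"
  proof (cases ?M)
    case (real M')
    show ?thesis
    proof (cases ?T)
      case (real T')
      have "ereal M' \<le> ereal (K * (s-u) powr -d * m) + ereal T'" using upper real \<open>?M = ereal M'\<close> by simp
      then have up: "M' \<le> K * (s-u) powr -d * m + T'" by simp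
      have T'0: "T' \<ge> 0" using T0 real by simp
      have "\<bar>M' - K*S*m\<bar> \<le> (K*m*(a-b) + K*\<eta>)*S + T'"
        by (rule real_ineq[OF K0 m\<eta> \<eta>0 S ha hb(2) hb(1) hP hQ up lower[OF \<open>?M = ereal M'\<close>] T'0])
      then show ?thesis using real \<open>?M = ereal M'\<close> by simp
    next
      case PInf then show ?thesis by simp
    next
      case MInf then show ?thesis using T0 by simp
    qed
  next
    case PInf
    then have "?T = \<infinity>" using upper by (cases ?T) auto
    then show ?thesis by simp
  next
    case MInf then show ?thesis using M0 by simp
  qed
  show ?thesis using goal
    unfolding S_def a_def b_def \<tau>_def u_def s_def K_def m_def \<eta>_def d_def by simp
qed

lemma weak_combine:
  fixes g T :: "'a::euclidean_space \<Rightarrow> ereal" and E :: "'a set" and d Dt :: real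
  assumes d: "d > 0" "d \<le> real DIM('a)" and Dt: "Dt \<ge> 0"
    and pt: "\<And>x. x \<in> E \<Longrightarrow> x \<noteq> 0 \<and> \<bar>g x\<bar> \<le> ereal (Dt * norm x powr -d) + T x"
  shows "weak_Lp (real DIM('a) / d) E g
     \<le> 4 * ennreal (Dt * unit_ball_vol (real DIM('a)) powr (d / real DIM('a))) + 4 * weak_Lp (real DIM('a) / d) UNIV T"
proof -
  define n where "n = real DIM('a)"
  have n: "n > 0" unfolding n_def by simp
  have q: "1 / (n / d) = d / n" by simp
  have q0: "0 < d / n" "d / n \<le> 1" using d n unfolding n_def by auto
  show ?thesis unfolding weak_Lp_def n_def[symmetric] q
  proof (rule SUP_least)
    fix l :: real assume "l \<in> {0<..}"
    then have l: "l > 0" by simp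
    define A where "A = {x::'a. x \<noteq> 0 \<and> Dt * norm x powr -d > l/2}"
    define B where "B = {x\<in>UNIV. \<bar>T x\<bar> > ereal (l/2)}"
    have sub: "{x\<in>E. \<bar>g x\<bar> > ereal l} \<subseteq> A \<union> B"
    proof
      fix x assume x: "x \<in> {x\<in>E. \<bar>g x\<bar> > ereal l}"
      show "x \<in> A \<union> B"
      proof (rule ccontr)
        assume "x \<notin> A \<union> B"
        then have h1: "Dt * norm x powr -d \<le> l/2" and h2: "\<bar>T x\<bar> \<le> ereal (l/2)"
          using pt x unfolding A_def B_def by auto
        have "T x \<le> ereal (l/2)" using h2 by (cases "T x") auto
        then have "ereal (Dt * norm x powr -d) + T x \<le> ereal (l/2) + ereal (l/2)"
          using h1 by (intro add_mono) auto
        then have "\<bar>g x\<bar> \<le> ereal l" using pt[of x] x by (simp, meson order_trans)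
        then show False using x by (simp add: not_less[symmetric])
      qed
    qed
    have "ennreal l * enn_pow (leb_outer {x\<in>E. \<bar>g x\<bar> > ereal l}) (d/n)
        \<le> ennreal l * enn_pow (leb_outer A + leb_outer B) (d/n)"
      using q0 by (intro mult_left_mono enn_pow_mono leb_outer_Un2 sub) auto
    also have "\<dots> \<le> ennreal l * (2 * (enn_pow (leb_outer A) (d/n) + enn_pow (leb_outer B) (d/n)))"
      using q0 by (intro mult_left_mono enn_pow_add) auto
    also have "\<dots> = 2 * (ennreal l * enn_pow (leb_outer A) (d/n)) + 4 * (ennreal (l/2) * enn_pow (leb_outer B) (d/n))"
    proof -
      have "ennreal (2*(l/2)) = ennreal 2 * ennreal (l/2)" by (rule ennreal_mult) (use l in auto)
      then have "ennreal l = 2 * ennreal (l/2)" by simp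
      then show ?thesis by (simp add: algebra_simps)
    qed
    also have "\<dots> \<le> 2 * ennreal (2 * Dt * unit_ball_vol n powr (d / n)) +
        4 * (SUP l\<in>{0<..}. ennreal l * enn_pow (leb_outer {x\<in>UNIV. \<bar>T x\<bar> > ereal l}) (d/n))"
    proof (intro add_mono mult_left_mono)
      show "ennreal l * enn_pow (leb_outer A) (d/n) \<le> ennreal (2 * Dt * unit_ball_vol n powr (d / n))"
        unfolding A_def n_def using small_part[OF d(1) Dt l] by simp
      show "ennreal (l/2) * enn_pow (leb_outer B) (d/n)
          \<le> (SUP l\<in>{0<..}. ennreal l * enn_pow (leb_outer {x\<in>UNIV. \<bar>T x\<bar> > ereal l}) (d/n))"
        unfolding B_def using l by (intro SUP_upper) auto
    qed auto
    also have "2 * ennreal (2 * Dt * unit_ball_vol n powr (d / n)) = 4 * ennreal (Dt * unit_ball_vol n powr (d / n))"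
    proof -
      have "ennreal (2 * (2 * (Dt * unit_ball_vol n powr (d / n)))) = ennreal 2 * ennreal (2 * (Dt * unit_ball_vol n powr (d / n)))"
        by (rule ennreal_mult) (use Dt in auto)
      moreover have "ennreal (2 * (Dt * unit_ball_vol n powr (d / n))) = ennreal 2 * ennreal (Dt * unit_ball_vol n powr (d / n))"
        by (rule ennreal_mult) (use Dt in auto)
      moreover have "ennreal (4 * (Dt * unit_ball_vol n powr (d / n))) = ennreal 4 * ennreal (Dt * unit_ball_vol n powr (d / n))"
        by (rule ennreal_mult) (use Dt in auto)
      ultimately show ?thesis by (simp add: mult.assoc)
    qed
    finally show "ennreal l * enn_pow (leb_outer {x\<in>E. \<bar>g x\<bar> > ereal l}) (d/n)
        \<le> 4 * ennreal (Dt * unit_ball_vol n powr (d / n)) +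
        4 * (SUP l\<in>{0<..}. ennreal l * enn_pow (leb_outer {x\<in>UNIV. \<bar>T x\<bar> > ereal l}) (d/n))" .
  qed
qed

lemma final_lim:
  fixes W :: "real \<Rightarrow> ennreal" and \<eta> :: "real \<Rightarrow> real" and K m Wq C' \<rho> d :: real
  assumes K0: "K \<ge> 0" and m0: "m \<ge> 0" and Wq: "Wq \<ge> 0" and C': "C' \<ge> 0" and \<rho>: "\<rho> > 0"
    and \<eta>0: "\<And>R. \<eta> R \<ge> 0"
    and \<eta>lim: "(\<lambda>k::nat. \<eta> (real k)) \<longlonglongrightarrow> 0"
    and main: "\<And>t R. t > 0 \<Longrightarrow> R \<ge> 0 \<Longrightarrow> t * R \<le> \<rho>/2 \<Longrightarrow>
       W t \<le> ennreal (4 * ((K*m*((1 - t*R/\<rho>) powr -d - (1 + t*R/\<rho>) powr -d) + K*\<eta> R) * Wq) + 4 * (C' * \<eta> R))"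
  shows "(W \<longlongrightarrow> 0) (at_right 0)"
proof (rule order_tendstoI)
  fix a :: ennreal assume "a < 0" then show "eventually (\<lambda>t. a < W t) (at_right 0)"
    by simp
next
  fix a :: ennreal assume a: "0 < a"
  obtain b where b: "0 < b" "b < a" using dense[OF a] by auto
  have "b < top" using b(2) top_greatest by (rule order.strict_trans2)
  then have "b \<noteq> \<infinity>" by simp
  then obtain \<epsilon> where \<epsilon>: "b = ennreal \<epsilon>" "\<epsilon> \<ge> 0" by (cases b) auto
  with b have \<epsilon>0: "\<epsilon> > 0" by (cases "\<epsilon> = 0") auto
  define h where "h t R = (1 - t*R/\<rho>) powr -d - (1 + t*R/\<rho>) powr -d" for t R :: real
  define P1 where "P1 = 4*K*Wq + 4*C' + 1"
  define \<eta>0 where "\<eta>0 = \<epsilon> / (2 * P1)"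
  have pos1: "P1 > 0" unfolding P1_def using K0 Wq C' by (simp add: add_nonneg_pos)
  have e1: "\<eta>0 * P1 = \<epsilon>/2" unfolding \<eta>0_def using pos1 by (simp add: field_simps)
  have \<eta>00: "\<eta>0 > 0" unfolding \<eta>0_def using \<epsilon>0 pos1 by simp
  have "eventually (\<lambda>k. \<eta> (real k) < \<eta>0) sequentially"
    using \<eta>lim \<eta>00 by (rule order_tendstoD(2))
  then obtain N :: nat where "\<forall>k\<ge>N. \<eta> (real k) < \<eta>0"
    unfolding eventually_sequentially by blast
  then have k: "\<eta> (real N) < \<eta>0" by simp
  define R where "R = real N"
  have R: "R \<ge> 0" unfolding R_def by simp
  define P2 where "P2 = 4*K*m*Wq + 1"
  define \<delta> where "\<delta> = \<epsilon> / (2 * P2)"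
  have pos2: "P2 > 0" unfolding P2_def using K0 Wq m0 by (simp add: add_nonneg_pos)
  have e2: "\<delta> * P2 = \<epsilon>/2" unfolding \<delta>_def using pos2 by (simp add: field_simps)
  have \<delta>0: "\<delta> > 0" unfolding \<delta>_def using \<epsilon>0 pos2 by simp
  have "((\<lambda>t. h t R) \<longlongrightarrow> (1 - 0*R/\<rho>) powr -d - (1 + 0*R/\<rho>) powr -d) (at_right 0)"
    unfolding h_def using \<rho> by (intro tendsto_intros) auto
  then have "((\<lambda>t. h t R) \<longlongrightarrow> 0) (at_right 0)" by simp
  then have ev1: "eventually (\<lambda>t. h t R < \<delta>) (at_right 0)" using \<delta>0 by (rule order_tendstoD(2))
  define c where "c = \<rho> / (2 * (R + 1))"
  have c0: "c > 0" unfolding c_def using \<rho> R by simp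
  have ev2: "eventually (\<lambda>t. 0 < t \<and> t < c) (at_right (0::real))"
    unfolding eventually_at_right_field using c0 by blast
  show "eventually (\<lambda>t. W t < a) (at_right 0)"
    using ev1 ev2
  proof eventually_elim
    case (elim t)
    then have t: "t > 0" "t < c" "h t R < \<delta>" by auto
    have tR: "t * R \<le> \<rho>/2"
    proof -
      have "t * R \<le> c * R" using t R by (simp add: mult_right_mono)
      also have "c * R \<le> \<rho>/2" unfolding c_def using \<rho> R by (simp add: field_simps)
      finally show ?thesis .
    qed
    have \<eta>R: "\<eta> R \<ge> 0" by (rule \<eta>0)
    have i1: "K*m*h t R*Wq \<le> K*m*\<delta>*Wq"
      using t K0 m0 Wq by (intro mult_right_mono mult_left_mono) auto
    have i2: "4*(K*m*\<delta>*Wq) \<le> \<epsilon>/2"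
    proof -
      have "4*(K*m*\<delta>*Wq) = \<delta> * (4*K*m*Wq)" by simp
      also have "\<dots> \<le> \<delta> * (4*K*m*Wq + 1)" using \<delta>0 by simp
      also have "\<dots> = \<epsilon>/2" using e2 unfolding P2_def .
      finally show ?thesis .
    qed
    have i3: "\<eta> R * (4*K*Wq + 4*C') \<le> \<epsilon>/2"
    proof -
      have "\<eta> R * (4*K*Wq + 4*C') \<le> \<eta>0 * (4*K*Wq + 4*C')"
        using k K0 Wq C' unfolding R_def by (intro mult_right_mono) auto
      also have "\<dots> \<le> \<eta>0 * (4*K*Wq + 4*C' + 1)" using \<eta>00 by simp
      also have "\<dots> = \<epsilon>/2" using e1 unfolding P1_def .
      finally show ?thesis .
    qed
    have real: "4 * ((K*m*h t R + K*\<eta> R) * Wq) + 4 * (C' * \<eta> R) \<le> \<epsilon>"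
    proof -
      have e: "4 * ((K*m*h t R + K*\<eta> R) * Wq) + 4 * (C' * \<eta> R) = 4*(K*m*h t R*Wq) + \<eta> R * (4*K*Wq + 4*C')"
        by (simp add: algebra_simps)
      show ?thesis unfolding e using i1 i2 i3 by linarith
    qed
    have "W t \<le> ennreal (4 * ((K*m*h t R + K*\<eta> R) * Wq) + 4 * (C' * \<eta> R))"
      using main[OF t(1) R tR] unfolding h_def .
    also have "\<dots> \<le> ennreal \<epsilon>" using real by (rule ennreal_leI)
    also have "\<dots> < a" using b \<epsilon> by simp
    finally show ?case .
  qed
qed
lemma tail_to_zero:
  fixes V :: "'a::euclidean_space measure"
  assumes V: "sets V = sets borel" and fm: "finite_measure V"
  shows "(\<lambda>k::nat. measure V (- cball 0 (real k))) \<longlonglongrightarrow> 0"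
proof -
  interpret V: finite_measure V by fact
  have r: "range (\<lambda>k::nat. - cball (0::'a) (real k)) \<subseteq> sets V"
    using V by (auto simp: image_subset_iff)
  have dc: "decseq (\<lambda>k::nat. - cball (0::'a) (real k))"
    unfolding decseq_def by (intro allI impI Compl_anti_mono subset_cball) simp
  have lim: "(\<lambda>k::nat. measure V (- cball 0 (real k))) \<longlonglongrightarrow> measure V (\<Inter>k. - cball (0::'a) (real k))"
    by (rule V.finite_Lim_measure_decseq[OF r dc])
  have "(\<Inter>k. - cball (0::'a) (real k)) = {}"
  proof -
    have "x \<notin> (\<Inter>k. - cball (0::'a) (real k))" for x :: 'a
    proof -
      obtain k :: nat where "norm x < real k" using reals_Archimedean2 by blast
      then have "x \<notin> - cball (0::'a) (real k)" by simp
      then show ?thesis by blast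
    qed
    then show ?thesis by blast
  qed
  with lim show ?thesis by simp
qed

theorem theorem1p1:
  fixes Phi :: "real \<Rightarrow> real" and \<alpha> :: real and e1 :: "'a::euclidean_space"
  assumes alpha: "0 \<le> \<alpha>" "\<alpha> < real DIM('a)"
    and Phi_nonneg: "\<forall>s\<ge>0. Phi s \<ge> 0"
    and Phi_decr: "antimono_on {0..} Phi"
    and e1: "e1 \<in> Basis"
    and sup_fin: "bdd_above ((\<lambda>r. phi_dil Phi \<alpha> r e1) ` {0<..})"
    and weak_bound: "\<exists>C::real. \<forall>\<mu>::'a measure. sets \<mu> = sets borel \<and> emeasure \<mu> UNIV < \<infinity> \<longrightarrow>
        weak_Lp (real DIM('a) / (real DIM('a) - \<alpha>)) UNIV (frac_max Phi \<alpha> \<mu>)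
          \<le> ennreal C * emeasure \<mu> UNIV"
  shows "\<forall>V::'a measure. \<forall>\<rho>>0. sets V = sets borel \<and> emeasure V UNIV < \<infinity> \<longrightarrow>
    ((\<lambda>t. weak_Lp (real DIM('a) / (real DIM('a) - \<alpha>)) (UNIV - ball 0 \<rho>)
        (\<lambda>x. frac_max Phi \<alpha> (dilate_measure t V) x
              - (SUP r\<in>{0<..}. ereal (phi_dil Phi \<alpha> r x)) * enn2ereal (emeasure V UNIV)))
      \<longlongrightarrow> 0) (at_right 0)"
proof (intro allI impI)
  fix V :: "'a measure" and \<rho> :: real
  assume \<rho>: "\<rho> > 0" and VV: "sets V = sets borel \<and> emeasure V UNIV < \<infinity>"
  then have V: "sets V = sets borel" and fin: "emeasure V UNIV < \<infinity>" by auto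
  define d where "d = real DIM('a) - \<alpha>"
  define n where "n = real DIM('a)"
  have d: "d > 0" "d \<le> n" using alpha unfolding d_def n_def by auto
  have phi_eq: "phi_dil Phi \<alpha> r x = r powr -d * Phi (norm x / r)" if "r > 0" for r and x :: 'a
    unfolding phi_dil_def d_def using that by simp
  have bdd1: "bdd_above ((\<lambda>r. r powr -(real DIM('a) - \<alpha>) * Phi (1/r)) ` {0<..})"
  proof -
    have "(\<lambda>r. phi_dil Phi \<alpha> r e1) ` {0<..} = (\<lambda>r. r powr -(real DIM('a) - \<alpha>) * Phi (1/r)) ` {0<..}"
      using e1 by (intro image_cong refl) (simp add: phi_eq d_def)
    then show ?thesis using sup_fin by simp
  qed
  have bdd: "bdd_above ((\<lambda>r. r powr -d * Phi (1/r)) ` {0<..})" using bdd1 unfolding d_def .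
  define K where "K = (SUP r\<in>{0<..}. r powr -d * Phi (1/r))"
  define m where "m = measure V UNIV"
  have spV: "space V = UNIV" using sets_eq_imp_space_eq[OF V] by simp
  interpret V: finite_measure V using fin spV by (intro finite_measureI) (simp add: less_top)
  have Vm: "emeasure V UNIV = ennreal m" unfolding m_def using V.emeasure_eq_measure by simp
  have m0: "m \<ge> 0" unfolding m_def by simp
  have K0: "K \<ge> 0"
  proof -
    have "1 powr -d * Phi (1/1) \<le> K" unfolding K_def by (rule cSUP_upper[OF _ bdd]) auto
    moreover have "Phi 1 \<ge> 0" using Phi_nonneg by auto
    ultimately show ?thesis by simp
  qed
  have Sx: "(SUP r\<in>{0<..}. ereal (phi_dil Phi \<alpha> r x)) = ereal (K * norm x powr -d)" if x: "x \<noteq> 0" for x :: 'a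
  proof -
    have s: "norm x > 0" using x by simp
    have G: "bdd_above ((\<lambda>r. r powr -d * Phi (norm x/r)) ` {0<..})"
       "(SUP r\<in>{0<..}. r powr -d * Phi (norm x/r)) = K * norm x powr -d"
      using G_scale[OF bdd s] unfolding K_def by auto
    have eq: "(SUP r\<in>{0<..}. ereal (phi_dil Phi \<alpha> r x)) = (SUP r\<in>{0<..}. ereal (r powr -d * Phi (norm x/r)))"
      by (intro SUP_cong refl) (simp add: phi_eq)
    have up: "(SUP r\<in>{0<..}. ereal (r powr -d * Phi (norm x/r))) \<le> ereal (K * norm x powr -d)"
      using cSUP_upper[OF _ G(1)] G(2) by (intro SUP_least) auto
    have lo: "ereal (1 powr -d * Phi (norm x/1)) \<le> (SUP r\<in>{0<..}. ereal (r powr -d * Phi (norm x/r)))"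
      by (intro SUP_upper) auto
    have "\<bar>SUP r\<in>{0<..}. ereal (r powr -d * Phi (norm x/r))\<bar> \<noteq> \<infinity>"
      using up lo by (cases "SUP r\<in>{0<..}. ereal (r powr -d * Phi (norm x/r))") auto
    then have "ereal (SUP r\<in>{0<..}. r powr -d * Phi (norm x/r)) = (SUP r\<in>{0<..}. ereal (r powr -d * Phi (norm x/r)))"
      by (rule ereal_SUP)
    then show ?thesis using eq G(2) by simp
  qed
  obtain C where C: "\<And>\<mu>::'a measure. sets \<mu> = sets borel \<Longrightarrow> emeasure \<mu> UNIV < \<infinity> \<Longrightarrow>
        weak_Lp (n / d) UNIV (frac_max Phi \<alpha> \<mu>) \<le> ennreal C * emeasure \<mu> UNIV"
    using weak_bound unfolding n_def d_def by blast
  define C' where "C' = max C 0"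
  have C': "C' \<ge> 0" "C \<le> C'" unfolding C'_def by auto
  define Wq where "Wq = unit_ball_vol n powr (d / n)"
  have Wq: "Wq \<ge> 0" unfolding Wq_def by simp
  define h where "h t R = (1 - t*R/\<rho>) powr -d - (1 + t*R/\<rho>) powr -d" for t R :: real
  define \<eta> where "\<eta> R = measure V (- cball 0 R)" for R
  let ?g = "\<lambda>t x. frac_max Phi \<alpha> (dilate_measure t V) x
              - (SUP r\<in>{0<..}. ereal (phi_dil Phi \<alpha> r x)) * enn2ereal (emeasure V UNIV)"
  have h0: "h t R \<ge> 0" if "0 \<le> t*R/\<rho>" "t*R/\<rho> \<le> 1/2" for t R
  proof -
    have "(1 + t*R/\<rho>) powr -d \<le> 1 powr -d" using powr_mono2'[of "-d" 1 "1 + t*R/\<rho>"] that d by simp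
    moreover have "1 powr -d \<le> (1 - t*R/\<rho>) powr -d" using powr_mono2'[of "-d" "1 - t*R/\<rho>" 1] that d by simp
    ultimately show ?thesis unfolding h_def by simp
  qed
  have main: "weak_Lp (n / d) (UNIV - ball 0 \<rho>) (?g t)
      \<le> ennreal (4 * ((K*m*h t R + K*\<eta> R) * Wq) + 4 * (C' * \<eta> R))"
    if t: "t > 0" and R: "R \<ge> 0" and tR: "t * R \<le> \<rho>/2" for t R
  proof -
    let ?V2 = "density V (indicator (- cball 0 R))"
    let ?T = "frac_max Phi \<alpha> (dilate_measure t ?V2)"
    define Dt where "Dt = K*m*h t R + K*\<eta> R"
    have \<eta>0: "\<eta> R \<ge> 0" unfolding \<eta>_def by simp
    have Dt: "Dt \<ge> 0" unfolding Dt_def using h0[of t R] t R tR \<rho> K0 m0 \<eta>0 by simp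
    have pt: "x \<noteq> 0 \<and> \<bar>?g t x\<bar> \<le> ereal (Dt * norm x powr -d) + ?T x" if x: "x \<in> UNIV - ball 0 \<rho>" for x
    proof -
      have xr: "norm x \<ge> \<rho>" using x by simp
      then have x0: "x \<noteq> 0" using \<rho> by auto
      have "?g t x = frac_max Phi \<alpha> (dilate_measure t V) x - ereal (K * norm x powr -d * m)"
        using Sx[OF x0] Vm m0 by simp
      then show ?thesis using x0 pointwise[OF alpha Phi_nonneg Phi_decr bdd1 V fin t R \<rho> xr tR]
        unfolding Dt_def h_def \<eta>_def K_def m_def d_def by (simp add: algebra_simps)
    qed
    have sV2: "sets (dilate_measure t ?V2) = sets borel" unfolding dilate_measure_def by simp
    have eV2: "emeasure (dilate_measure t ?V2) UNIV = ennreal (\<eta> R)"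
    proof -
      have "emeasure (dilate_measure t ?V2) UNIV = emeasure ?V2 UNIV"
        unfolding dilate_measure_def using V spV
        by (subst emeasure_distr) (auto simp: measurable_cong_sets[OF V refl])
      also have "\<dots> = emeasure V (- cball 0 R)"
        using V spV by (subst emeasure_density) (auto simp: nn_integral_indicator)
      also have "\<dots> = ennreal (\<eta> R)" unfolding \<eta>_def using V.emeasure_eq_measure by simp
      finally show ?thesis .
    qed
    have wT: "weak_Lp (n / d) UNIV ?T \<le> ennreal (C' * \<eta> R)"
    proof -
      have "weak_Lp (n / d) UNIV ?T \<le> ennreal C * ennreal (\<eta> R)"
        using C[OF sV2] eV2 by simp
      also have "\<dots> \<le> ennreal C' * ennreal (\<eta> R)" using C' by (intro mult_right_mono ennreal_leI) auto
      also have "\<dots> = ennreal (C' * \<eta> R)" using C' \<eta>0 by (simp add: ennreal_mult)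
      finally show ?thesis .
    qed
    have "weak_Lp (n / d) (UNIV - ball 0 \<rho>) (?g t) \<le> 4 * ennreal (Dt * Wq) + 4 * weak_Lp (n / d) UNIV ?T"
      using weak_combine[where E="UNIV - ball 0 \<rho>" and g="?g t" and T="?T", OF d(1) _ Dt pt] d unfolding n_def Wq_def by simp
    also have "\<dots> \<le> 4 * ennreal (Dt * Wq) + 4 * ennreal (C' * \<eta> R)"
      using wT by (intro add_left_mono mult_left_mono) auto
    also have "\<dots> = ennreal (4 * (Dt * Wq) + 4 * (C' * \<eta> R))"
      using Dt Wq C' \<eta>0 by (simp add: ennreal_mult ennreal_plus)
    finally show ?thesis unfolding Dt_def .
  qed
  show "((\<lambda>t. weak_Lp (real DIM('a) / (real DIM('a) - \<alpha>)) (UNIV - ball 0 \<rho>) (?g t)) \<longlongrightarrow> 0) (at_right 0)"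
  proof -
    have \<eta>lim: "(\<lambda>k::nat. \<eta> (real k)) \<longlonglongrightarrow> 0"
      unfolding \<eta>_def by (rule tail_to_zero[OF V V.finite_measure_axioms])
    have "((\<lambda>t. weak_Lp (n / d) (UNIV - ball 0 \<rho>) (?g t)) \<longlongrightarrow> 0) (at_right 0)"
    proof (rule final_lim[OF K0 m0 Wq C'(1) \<rho> _ \<eta>lim])
      show "\<eta> R \<ge> 0" for R unfolding \<eta>_def by simp
      show "weak_Lp (n / d) (UNIV - ball 0 \<rho>) (?g t) \<le> ennreal (4 * ((K*m*((1 - t*R/\<rho>) powr -d - (1 + t*R/\<rho>) powr -d) + K*\<eta> R) * Wq) + 4 * (C' * \<eta> R))"
        if "t > 0" "R \<ge> 0" "t * R \<le> \<rho>/2" for t R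
        using main[OF that] unfolding h_def .
    qed
    then show ?thesis unfolding n_def d_def .
  qed
qed

end
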